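(* Let $A$ be an algebra over a field $k$ of characteristic $0$ with a double bracket $\{\!\{-,-\}\!\}$, associated bracket $\{a,b\}=\{\!\{a,b\}\!\}'\{\!\{a,b\}\!\}''$, and associated tri-ary operation $\{\!\{-,-,-\}\!\}$. Then for all $a,b,c\in A$ the following identity holds in $A\otimes A$: \[\{a,\{\!\{b,c\}\!\}\}-\{\!\{\{a,b\},c\}\!\}-\{\!\{b,\{a,c\}\}\!\}=(m\otimes1)\{\!\{a,b,c\}\!\}-(1\otimes m)\{\!\{b,a,c\}\!\},\] where $m$ is multiplication of $A$ and $\{a,-\}$ acts on tensors by $\{a,u\otimes v\}=\{a,u\}\otimes v+u\otimes\{a,v\}$.
   Context: Unadorned tensor products are over $k$; $x\in V\otimes W$ is written $x'\otimes x''$ (summation suppressed), $x^\circ=x''\otimes x'$, and $\tau_s(a_1\otimes\cdots\otimes a_n)=a_{s^{-1}(1)}\otimes\cdots\otimes a_{s^{-1}(n)}$ for $s\in S_n$. A double bracket on $A$ is a bilinear map $\{\!\{-,-\}\!\}:A\times A\to A\otimes A$ with $\{\!\{a,bc\}\!\}=b\{\!\{a,c\}\!\}+\{\!\{a,b\}\!\}c$ (outer bimodule structure $b(x\otimes y)c=bx\otimes yc$) and $\{\!\{a,b\}\!\}=-\{\!\{b,a\}\!\}^\circ$. For $a\in A$, $b=b_1\otimes\cdots\otimes b_n$, $\{\!\{a,b\}\!\}_L=\{\!\{a,b_1\}\!\}\otimes b_2\otimes\cdots\otimes b_n$. The associated tri-ary operation is $\{\!\{a,b,c\}\!\}=\{\!\{a,\{\!\{b,c\}\!\}\}\!\}_L+\tau_{(123)}\{\!\{b,\{\!\{c,a\}\!\}\}\!\}_L+\tau_{(132)}\{\!\{c,\{\!\{a,b\}\!\}\}\!\}_L$.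 *)

theory Defs
  imports Main "HOL-Analysis.Analysis"
begin

text \<open>An element of A \<otimes> A is represented by a finite
 list of pairs (x,y) standing for the sum of the x \<otimes> y; an element of A \<otimes> A \<otimes> A by a
 list of triples. Two representatives denote the same element of A \<otimes> A iff they pair
 equally with all products of linear functionals (the canonical map
 A \<otimes> A \<rightarrow> (A* \<times> A* \<rightarrow> k) is injective over a field).\<close>

definition lin_fun :: "('k::field \<Rightarrow> 'a::ab_group_add \<Rightarrow> 'a) \<Rightarrow> ('a \<Rightarrow> 'k) \<Rightarrow> bool" where
  "lin_fun sc \<phi> \<longleftrightarrow> (\<forall>x y. \<phi> (x + y) = \<phi> x + \<phi> y) \<and> (\<forall>c x. \<phi> (sc c x) = c * \<phi> x)"

definition ev2 :: "('a \<Rightarrow> 'k::field) \<Rightarrow> ('a \<Rightarrow> 'k) \<Rightarrow> ('a \<times> 'a) list \<Rightarrow> 'k" where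
  "ev2 \<phi> \<psi> t = (\<Sum>(x, y)\<leftarrow>t. \<phi> x * \<psi> y)"

definition teq2 :: "('k::field \<Rightarrow> 'a::ab_group_add \<Rightarrow> 'a) \<Rightarrow> ('a \<times> 'a) list \<Rightarrow> ('a \<times> 'a) list \<Rightarrow> bool" where
  "teq2 sc s t \<longleftrightarrow> (\<forall>\<phi> \<psi>. lin_fun sc \<phi> \<longrightarrow> lin_fun sc \<psi> \<longrightarrow> ev2 \<phi> \<psi> s = ev2 \<phi> \<psi> t)"

definition k_algebra :: "('k::field \<Rightarrow> 'a::ring_1 \<Rightarrow> 'a) \<Rightarrow> bool" where
  "k_algebra sc \<longleftrightarrow> vector_space sc \<and>
     (\<forall>c x y. sc c (x * y) = sc c x * y \<and> sc c (x * y) = x * sc c y)"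

definition smult2 :: "('k \<Rightarrow> 'a \<Rightarrow> 'a) \<Rightarrow> 'k \<Rightarrow> ('a \<times> 'a) list \<Rightarrow> ('a \<times> 'a) list" where
  "smult2 sc c t = map (\<lambda>(x, y). (sc c x, y)) t"

definition neg2 :: "('a::ab_group_add \<times> 'a) list \<Rightarrow> ('a \<times> 'a) list" where
  "neg2 t = map (\<lambda>(x, y). (- x, y)) t"

definition flip2 :: "('a \<times> 'a) list \<Rightarrow> ('a \<times> 'a) list" where
  "flip2 t = map (\<lambda>(x, y). (y, x)) t"

definition is_double_bracket ::
  "('k::field \<Rightarrow> 'a::ring_1 \<Rightarrow> 'a) \<Rightarrow> ('a \<Rightarrow> 'a \<Rightarrow> ('a \<times> 'a) list) \<Rightarrow> bool" where
  "is_double_bracket sc D \<longleftrightarrow>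
     (\<forall>a a' b. teq2 sc (D (a + a') b) (D a b @ D a' b)) \<and>
     (\<forall>a b b'. teq2 sc (D a (b + b')) (D a b @ D a b')) \<and>
     (\<forall>c a b. teq2 sc (D (sc c a) b) (smult2 sc c (D a b))) \<and>
     (\<forall>c a b. teq2 sc (D a (sc c b)) (smult2 sc c (D a b))) \<and>
     (\<forall>a b c. teq2 sc (D a (b * c))
        (map (\<lambda>(x, y). (b * x, y)) (D a c) @ map (\<lambda>(x, y). (x, y * c)) (D a b))) \<and>
     (\<forall>a b. teq2 sc (D a b) (neg2 (flip2 (D b a))))"

definition mult2 :: "('a::ring_1 \<times> 'a) list \<Rightarrow> 'a" where
  "mult2 t = (\<Sum>(x, y)\<leftarrow>t. x * y)"

definition br :: "('a::ring_1 \<Rightarrow> 'a \<Rightarrow> ('a \<times> 'a) list) \<Rightarrow> 'a \<Rightarrow> 'a \<Rightarrow> 'a" where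
  "br D a b = mult2 (D a b)"

definition brT :: "('a::ring_1 \<Rightarrow> 'a \<Rightarrow> ('a \<times> 'a) list) \<Rightarrow> 'a \<Rightarrow> ('a \<times> 'a) list \<Rightarrow> ('a \<times> 'a) list" where
  "brT D a t = concat (map (\<lambda>(u, v). [(br D a u, v), (u, br D a v)]) t)"

definition dblL :: "('a \<Rightarrow> 'a \<Rightarrow> ('a \<times> 'a) list) \<Rightarrow> 'a \<Rightarrow> ('a \<times> 'a) list \<Rightarrow> ('a \<times> 'a \<times> 'a) list" where
  "dblL D a t = concat (map (\<lambda>(x, y). map (\<lambda>(p, q). (p, q, y)) (D a x)) t)"

text \<open>tau_s (a1 \<otimes> a2 \<otimes> a3) = a_{s^-1(1)} \<otimes> a_{s^-1(2)} \<otimes> a_{s^-1(3)}.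
 For s = (123): a3 \<otimes> a1 \<otimes> a2; for s = (132): a2 \<otimes> a3 \<otimes> a1.\<close>
definition tau123 :: "'a \<times> 'a \<times> 'a \<Rightarrow> 'a \<times> 'a \<times> 'a" where
  "tau123 = (\<lambda>(x1, x2, x3). (x3, x1, x2))"

definition tau132 :: "'a \<times> 'a \<times> 'a \<Rightarrow> 'a \<times> 'a \<times> 'a" where
  "tau132 = (\<lambda>(x1, x2, x3). (x2, x3, x1))"

definition tri :: "('a \<Rightarrow> 'a \<Rightarrow> ('a \<times> 'a) list) \<Rightarrow> 'a \<Rightarrow> 'a \<Rightarrow> 'a \<Rightarrow> ('a \<times> 'a \<times> 'a) list" where
  "tri D a b c = dblL D a (D b c) @ map tau123 (dblL D b (D c a)) @ map tau132 (dblL D c (D a b))"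

definition m_1 :: "('a::ring_1 \<times> 'a \<times> 'a) list \<Rightarrow> ('a \<times> 'a) list" where
  "m_1 t = map (\<lambda>(x, y, z). (x * y, z)) t"

definition one_m :: "('a::ring_1 \<times> 'a \<times> 'a) list \<Rightarrow> ('a \<times> 'a) list" where
  "one_m t = map (\<lambda>(x, y, z). (x, y * z)) t"

end

theory Submission
  imports Defs
begin

definition bil :: "('k::field \<Rightarrow> 'a::ab_group_add \<Rightarrow> 'a) \<Rightarrow> ('a \<Rightarrow> 'a \<Rightarrow> 'k) \<Rightarrow> bool" where
  "bil sc F \<longleftrightarrow> (\<forall>y. lin_fun sc (\<lambda>x. F x y)) \<and> (\<forall>x. lin_fun sc (\<lambda>y. F x y))"

definition sF :: "('a \<Rightarrow> 'a \<Rightarrow> 'k::comm_monoid_add) \<Rightarrow> ('a \<times> 'a) list \<Rightarrow> 'k" where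
  "sF F L = (\<Sum>(x, y)\<leftarrow>L. F x y)"

lemma sF_simps[simp]: "sF F [] = 0" "sF F ((x,y)#L) = F x y + sF F L" "sF F (L @ M) = sF F L + sF F M"
  by (simp_all add: sF_def)

lemma lin_fun_add: "lin_fun sc \<phi> \<Longrightarrow> \<phi> (x + y) = \<phi> x + \<phi> y" by (simp add: lin_fun_def)
lemma lin_fun_scale: "lin_fun sc \<phi> \<Longrightarrow> \<phi> (sc c x) = c * \<phi> x" by (simp add: lin_fun_def)
lemma lin_fun_zero: "lin_fun sc \<phi> \<Longrightarrow> \<phi> 0 = 0"
  using lin_fun_add[of sc \<phi> 0 0] by (metis add_cancel_right_right add_0)
lemma lin_fun_neg: "lin_fun sc \<phi> \<Longrightarrow> \<phi> (- x) = - \<phi> x"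
  using lin_fun_add[of sc \<phi> x "-x"] lin_fun_zero[of sc \<phi>] by (metis add_right_cancel add_0 add.commute add.right_inverse)
lemma lin_fun_sum: "lin_fun sc \<phi> \<Longrightarrow> \<phi> (sum f S) = (\<Sum>i\<in>S. \<phi> (f i))"
  by (induction S rule: infinite_finite_induct) (auto simp: lin_fun_zero lin_fun_add)
lemma lin_fun_sum_list: "lin_fun sc \<phi> \<Longrightarrow> \<phi> (sum_list xs) = sum_list (map \<phi> xs)"
  by (induction xs) (auto simp: lin_fun_zero lin_fun_add)

lemma sF_cong: "(\<And>x y. (x,y) \<in> set L \<Longrightarrow> F x y = G x y) \<Longrightarrow> sF F L = sF G L"
  by (induction L) auto

lemma sF_add: "sF (\<lambda>x y. F x y + G x y) L = sF F L + sF G L"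
  by (induction L) (auto simp: algebra_simps)

lemma sF_neg: "sF (\<lambda>x y. - (F x y::'k::ab_group_add)) L = - sF F L"
  by (induction L) (auto simp: algebra_simps)

lemma sF_multr: "sF (\<lambda>x y. F x y * (c::'k::comm_ring)) L = sF F L * c"
  by (induction L) (auto simp: algebra_simps)

lemma sF_multl: "sF (\<lambda>x y. (c::'k::comm_ring) * F x y) L = c * sF F L"
  by (induction L) (auto simp: algebra_simps)

lemma ev2_sF: "ev2 \<phi> \<psi> L = sF (\<lambda>x y. \<phi> x * \<psi> y) L"
  by (simp add: ev2_def sF_def)

lemma sF_sum: "finite E \<Longrightarrow> sF (\<lambda>x y. \<Sum>b\<in>E. G b x y) L = (\<Sum>b\<in>E. sF (G b) L)"
  by (induction L) (auto simp: sum.distrib)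

lemma (in vector_space) teq2_bil:
  assumes "teq2 scale s t" "bil scale F"
  shows "sF F s = sF F t"
proof -
  define B where "B = extend_basis {}"
  have indB: "independent B" and spB: "span B = UNIV"
    using independent_extend_basis[OF independent_empty] span_extend_basis[OF independent_empty]
    by (auto simp: B_def)
  define r where "r x b = representation B x b" for x b
  have linr: "lin_fun scale (\<lambda>x. r x b)" for b
    unfolding lin_fun_def r_def using indB spB
    by (simp add: representation_add representation_scale)
  define X where "X = fst ` set (s @ t)"
  define E where "E = (\<Union>x\<in>X. {b. r x b \<noteq> 0})"
  have finE: "finite E" unfolding E_def X_def r_def
    by (auto intro!: finite_representation)
  have repx: "(\<Sum>b\<in>E. r x b *s b) = x" if "x \<in> X" for x
  proof -
    have "(\<Sum>b\<in>E. r x b *s b) = (\<Sum>b | r x b \<noteq> 0. r x b *s b)"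
      using that finE by (intro sum.mono_neutral_right) (auto simp: E_def)
    also have "\<dots> = x" unfolding r_def using indB spB
      by (intro sum_nonzero_representation_eq) auto
    finally show ?thesis .
  qed
  have Fx: "F x y = (\<Sum>b\<in>E. r x b * F b y)" if "x \<in> X" for x y
  proof -
    have l: "lin_fun scale (\<lambda>x. F x y)" using assms(2) by (simp add: bil_def)
    have "F x y = F (\<Sum>b\<in>E. r x b *s b) y" using repx[OF that] by simp
    also have "\<dots> = (\<Sum>b\<in>E. F (r x b *s b) y)" using lin_fun_sum[OF l] by simp
    also have "\<dots> = (\<Sum>b\<in>E. r x b * F b y)" using lin_fun_scale[OF l] by simp
    finally show ?thesis .
  qed
  have key: "sF F L = (\<Sum>b\<in>E. ev2 (\<lambda>x. r x b) (F b) L)" if "fst ` set L \<subseteq> X" for L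
  proof -
    have "sF F L = sF (\<lambda>x y. \<Sum>b\<in>E. r x b * F b y) L"
      using that by (intro sF_cong) (auto simp: Fx)
    also have "\<dots> = (\<Sum>b\<in>E. ev2 (\<lambda>x. r x b) (F b) L)"
      using finE by (simp add: sF_sum ev2_sF)
    finally show ?thesis .
  qed
  have "sF F s = (\<Sum>b\<in>E. ev2 (\<lambda>x. r x b) (F b) s)" by (rule key) (auto simp: X_def)
  also have "\<dots> = (\<Sum>b\<in>E. ev2 (\<lambda>x. r x b) (F b) t)"
    using assms(1) linr assms(2) unfolding teq2_def bil_def by auto
  also have "\<dots> = sF F t" by (rule key[symmetric]) (auto simp: X_def)
  finally show ?thesis .
qed


lemma bil_prod: "lin_fun sc f \<Longrightarrow> lin_fun sc g \<Longrightarrow> bil sc (\<lambda>x y. f x * g y)"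
  by (simp add: bil_def lin_fun_def algebra_simps)

lemma lin_multl: "k_algebra sc \<Longrightarrow> lin_fun sc \<phi> \<Longrightarrow> lin_fun sc (\<lambda>x. \<phi> (p * x))"
  unfolding k_algebra_def lin_fun_def by (metis distrib_left)

lemma lin_multr: "k_algebra sc \<Longrightarrow> lin_fun sc \<phi> \<Longrightarrow> lin_fun sc (\<lambda>x. \<phi> (x * q))"
  unfolding k_algebra_def lin_fun_def by (metis distrib_right)

lemma lin_sF_param: "(\<And>x y. lin_fun sc (\<lambda>q. f q x y)) \<Longrightarrow> lin_fun sc (\<lambda>q. sF (f q) L)"
  by (induction L) (auto simp: lin_fun_def algebra_simps)

lemma lin_cmul: "lin_fun sc f \<Longrightarrow> lin_fun sc (\<lambda>x. c * f x)"
  by (simp add: lin_fun_def algebra_simps)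

lemma lin_cmulr: "lin_fun sc f \<Longrightarrow> lin_fun sc (\<lambda>x. f x * c)"
  by (simp add: lin_fun_def algebra_simps)

lemma bil_prod2: "lin_fun sc f \<Longrightarrow> lin_fun sc g \<Longrightarrow> bil sc (\<lambda>x y. g y * f x)"
  by (simp add: bil_def lin_fun_def algebra_simps)

lemma sF_map_cp: "sum_list (map f (map (\<lambda>(p, q). g p q) L)) = sF (\<lambda>p q. f (g p q)) L"
  by (induction L) auto

lemma sF_neg2: assumes "bil sc F" shows "sF F (neg2 L) = - sF F L"
proof -
  have *: "F (-x) y = - F x y" for x y using assms lin_fun_neg[of sc "\<lambda>x. F x y" x] by (simp add: bil_def)
  show ?thesis by (induction L) (auto simp: neg2_def *)
qed

lemma sF_flip2: "sF F (flip2 L) = sF (\<lambda>x y. F y x) L"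
  by (induction L) (auto simp: flip2_def)

lemma sF_smult2: assumes "bil sc F" shows "sF F (smult2 sc c L) = c * sF F L"
proof -
  have *: "F (sc c x) y = c * F x y" for x y using assms lin_fun_scale[of sc "\<lambda>x. F x y" c x] by (simp add: bil_def)
  show ?thesis by (induction L) (auto simp: smult2_def * algebra_simps)
qed

lemma bil_swap: "bil sc F \<Longrightarrow> bil sc (\<lambda>x y. F y x)"
  by (simp add: bil_def)

lemma sF_map: "sF F (map (\<lambda>(x, y). (f x y, g x y)) L) = sF (\<lambda>x y. F (f x y) (g x y)) L"
  by (induction L) auto


definition sF3 :: "('a \<Rightarrow> 'a \<Rightarrow> 'a \<Rightarrow> 'k::comm_monoid_add) \<Rightarrow> ('a \<times> 'a \<times> 'a) list \<Rightarrow> 'k" where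
  "sF3 G T = (\<Sum>(x, y, z)\<leftarrow>T. G x y z)"

lemma sF3_simps[simp]: "sF3 G [] = 0" "sF3 G ((x,y,z)#T) = G x y z + sF3 G T" "sF3 G (T @ U) = sF3 G T + sF3 G U"
  by (simp_all add: sF3_def)

lemma sF_m1: "sF F (m_1 T) = sF3 (\<lambda>x y z. F (x*y) z) T"
  by (induction T) (auto simp: m_1_def)
lemma sF_onem: "sF F (one_m T) = sF3 (\<lambda>x y z. F x (y*z)) T"
  by (induction T) (auto simp: one_m_def)
lemma sF3_tau123: "sF3 G (map tau123 T) = sF3 (\<lambda>x y z. G z x y) T"
  by (induction T) (auto simp: tau123_def)
lemma sF3_tau132: "sF3 G (map tau132 T) = sF3 (\<lambda>x y z. G y z x) T"
  by (induction T) (auto simp: tau132_def)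
lemma sF3_map_trip: "sF3 G (map (\<lambda>(p, q). (p, q, y)) L) = sF (\<lambda>p q. G p q y) L"
  by (induction L) auto
lemma sF3_dblL: "sF3 G (dblL D a L) = sF (\<lambda>u v. sF (\<lambda>p q. G p q v) (D a u)) L"
  by (induction L) (auto simp: dblL_def sF3_map_trip)
lemma sF_brT: "sF F (brT D a L) = sF (\<lambda>u v. F (br D a u) v + F u (br D a v)) L"
  by (induction L) (auto simp: brT_def)
lemma br_sF: "lin_fun sc \<phi> \<Longrightarrow> \<phi> (br D a u) = sF (\<lambda>p q. \<phi> (p*q)) (D a u)"
proof -
  assume l: "lin_fun sc \<phi>"
  have "\<phi> (\<Sum>(x, y)\<leftarrow>L. x * y) = sF (\<lambda>p q. \<phi> (p*q)) L" for L
    by (induction L) (auto simp: lin_fun_zero[OF l] lin_fun_add[OF l])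
  then show ?thesis unfolding br_def mult2_def by simp
qed

context
  fixes sc :: "'k::field \<Rightarrow> 'a::ring_1 \<Rightarrow> 'a" and D :: "'a \<Rightarrow> 'a \<Rightarrow> ('a \<times> 'a) list"
  assumes alg: "k_algebra sc" and db: "is_double_bracket sc D"
begin

lemma vs: "vector_space sc" using alg by (simp add: k_algebra_def)

lemma D_resp: "teq2 sc s t \<Longrightarrow> bil sc F \<Longrightarrow> sF F s = sF F t"
  by (rule vector_space.teq2_bil[OF vs])

lemma D_lin2: "bil sc F \<Longrightarrow> lin_fun sc (\<lambda>q. sF F (D p q))"
  unfolding lin_fun_def
proof (intro conjI allI)
  assume F: "bil sc F"
  fix x y show "sF F (D p (x + y)) = sF F (D p x) + sF F (D p y)"
    using D_resp[OF _ F, of "D p (x + y)" "D p x @ D p y"] db unfolding is_double_bracket_def by simp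
next
  assume F: "bil sc F"
  fix c x show "sF F (D p (sc c x)) = c * sF F (D p x)"
    using D_resp[OF _ F] db sF_smult2[OF F] unfolding is_double_bracket_def by metis
qed

lemma D_anti: "bil sc F \<Longrightarrow> sF F (D a b) = - sF (\<lambda>x y. F y x) (D b a)"
  using D_resp[of "D a b" "neg2 (flip2 (D b a))" F] db
  by (simp add: is_double_bracket_def sF_neg2 sF_flip2)

lemma D_der: "bil sc F \<Longrightarrow>
   sF F (D a (b * c)) = sF (\<lambda>x y. F (b * x) y) (D a c) + sF (\<lambda>x y. F x (y * c)) (D a b)"
proof -
  assume F: "bil sc F"
  have "teq2 sc (D a (b * c))
        (map (\<lambda>(x, y). (b * x, y)) (D a c) @ map (\<lambda>(x, y). (x, y * c)) (D a b))"
    using db unfolding is_double_bracket_def by blast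
  from D_resp[OF this F] show ?thesis by (simp add: sF_map)
qed

lemma D_sumlist: "bil sc F \<Longrightarrow> sF F (D p (sum_list xs)) = (\<Sum>x\<leftarrow>xs. sF F (D p x))"
  using lin_fun_sum_list[OF D_lin2] by (simp add: comp_def)


lemma main:
  assumes \<phi>: "lin_fun sc \<phi>" and \<psi>: "lin_fun sc \<psi>"
  shows "ev2 \<phi> \<psi> (brT D a (D b c) @ neg2 (D (br D a b) c) @ neg2 (D b (br D a c)))
       = ev2 \<phi> \<psi> (m_1 (tri D a b c) @ neg2 (one_m (tri D b a c)))"
proof -
  define F0 where "F0 = (\<lambda>x y. \<phi> x * \<psi> y)"
  have bF0: "bil sc F0" unfolding F0_def by (rule bil_prod[OF \<phi> \<psi>])
  define T1a where "T1a = sF (\<lambda>u v. \<phi> (br D a u) * \<psi> v) (D b c)"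
  define T1b where "T1b = sF (\<lambda>u v. \<phi> u * \<psi> (br D a v)) (D b c)"
  define T2 where "T2 = sF F0 (D (br D a b) c)"
  define T3 where "T3 = sF F0 (D b (br D a c))"
  define X2 where "X2 = sF (\<lambda>p q. sF (\<lambda>r s. \<phi> s * \<psi> (p * r)) (D c q)) (D a b)"
  define X3 where "X3 = sF (\<lambda>p q. sF (\<lambda>r s. \<phi> (p * r) * \<psi> s) (D b q)) (D a c)"
  define R1a where "R1a = sF (\<lambda>u v. sF (\<lambda>p q. \<phi> (p * q) * \<psi> v) (D a u)) (D b c)"
  define R1b where "R1b = sF (\<lambda>p q. sF (\<lambda>r s. \<phi> (q * r) * \<psi> s) (D b p)) (D c a)"
  define R1c where "R1c = sF (\<lambda>p q. sF (\<lambda>r s. \<phi> (s * q) * \<psi> r) (D c p)) (D a b)"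
  define R2a where "R2a = sF (\<lambda>p q. sF (\<lambda>r s. \<phi> r * \<psi> (s * q)) (D b p)) (D a c)"
  define R2b where "R2b = sF (\<lambda>p q. sF (\<lambda>r s. \<phi> q * \<psi> (r * s)) (D a p)) (D c b)"
  define R2c where "R2c = sF (\<lambda>p q. sF (\<lambda>r s. \<phi> s * \<psi> (q * r)) (D c p)) (D b a)"
  have L: "ev2 \<phi> \<psi> (brT D a (D b c) @ neg2 (D (br D a b) c) @ neg2 (D b (br D a c)))
       = T1a + T1b - T2 - T3"
    unfolding ev2_sF
    by (simp add: sF_brT sF_add sF_neg2[OF bil_prod[OF \<phi> \<psi>]] T1a_def T1b_def T2_def T3_def F0_def)
  have R: "ev2 \<phi> \<psi> (m_1 (tri D a b c) @ neg2 (one_m (tri D b a c)))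
       = (R1a + R1b + R1c) - (R2a + R2b + R2c)"
    unfolding ev2_sF tri_def
    by (simp add: sF_m1 sF_onem sF_neg2[OF bil_prod[OF \<phi> \<psi>]] sF3_tau123 sF3_tau132 sF3_dblL F0_def
        R1a_def R1b_def R1c_def R2a_def R2b_def R2c_def)
  have e1: "R1a = T1a" unfolding R1a_def T1a_def
    by (intro sF_cong) (simp add: br_sF[OF \<phi>] sF_multr)
  have brs: "br D a x = sum_list (map (\<lambda>(p, q). p * q) (D a x))" for x
    by (simp add: br_def mult2_def)
  have e3: "T3 = X3 + R2a"
  proof -
    have "T3 = sF (\<lambda>p q. sF F0 (D b (p * q))) (D a c)"
      unfolding T3_def brs D_sumlist[OF bF0] sF_map_cp ..
    also have "\<dots> = sF (\<lambda>p q. sF (\<lambda>x y. F0 (p * x) y) (D b q) + sF (\<lambda>x y. F0 x (y * q)) (D b p)) (D a c)"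
      by (intro sF_cong) (rule D_der[OF bF0])
    also have "\<dots> = X3 + R2a" unfolding sF_add X3_def R2a_def F0_def ..
    finally show ?thesis .
  qed
  have e2: "T2 = - (X2 + R1c)"
  proof -
    define F1 where "F1 = (\<lambda>x y. F0 y x)"
    have bF1: "bil sc F1" unfolding F1_def by (rule bil_swap[OF bF0])
    have "T2 = - sF F1 (D c (br D a b))" unfolding T2_def F1_def by (rule D_anti[OF bF0])
    also have "sF F1 (D c (br D a b)) = sF (\<lambda>p q. sF F1 (D c (p * q))) (D a b)"
      unfolding brs D_sumlist[OF bF1] sF_map_cp ..
    also have "\<dots> = sF (\<lambda>p q. sF (\<lambda>x y. F1 (p * x) y) (D c q) + sF (\<lambda>x y. F1 x (y * q)) (D c p)) (D a b)"
      by (intro sF_cong) (rule D_der[OF bF1])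
    also have "\<dots> = X2 + R1c" unfolding sF_add X2_def R1c_def F1_def F0_def ..
    finally show ?thesis .
  qed
  have lbr: "lin_fun sc (\<lambda>p. \<psi> (br D a p))"
  proof -
    have b: "bil sc (\<lambda>x y. \<psi> (x * y))" unfolding bil_def
      using lin_multr[OF alg \<psi>] lin_multl[OF alg \<psi>] by auto
    have "(\<lambda>p. \<psi> (br D a p)) = (\<lambda>p. sF (\<lambda>x y. \<psi> (x * y)) (D a p))"
      using br_sF[OF \<psi>] by auto
    then show ?thesis using D_lin2[OF b] by simp
  qed
  have e4: "R2b = - T1b"
  proof -
    define G where "G = (\<lambda>p q. \<phi> q * \<psi> (br D a p))"
    have bG: "bil sc G" unfolding G_def by (rule bil_prod2[OF lbr \<phi>])
    have "R2b = sF G (D c b)" unfolding R2b_def G_def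
      by (intro sF_cong) (simp add: br_sF[OF \<psi>] sF_multl)
    also have "\<dots> = - sF (\<lambda>x y. G y x) (D b c)" by (rule D_anti[OF bG])
    also have "\<dots> = - T1b" unfolding T1b_def G_def ..
    finally show ?thesis .
  qed
  have e5: "R2c = - X2"
  proof -
    define H where "H = (\<lambda>p q. sF (\<lambda>r s. \<phi> s * \<psi> (q * r)) (D c p))"
    have bH: "bil sc H" unfolding H_def bil_def
    proof (intro conjI allI)
      fix q show "lin_fun sc (\<lambda>p. sF (\<lambda>r s. \<phi> s * \<psi> (q * r)) (D c p))"
        by (rule D_lin2[OF bil_prod2[OF lin_multl[OF alg \<psi>] \<phi>]])
    next
      fix p show "lin_fun sc (\<lambda>q. sF (\<lambda>r s. \<phi> s * \<psi> (q * r)) (D c p))"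
        by (rule lin_sF_param) (rule lin_cmul[OF lin_multr[OF alg \<psi>]])
    qed
    have "R2c = sF H (D b a)" unfolding R2c_def H_def ..
    also have "\<dots> = - sF (\<lambda>x y. H y x) (D a b)" by (rule D_anti[OF bH])
    also have "\<dots> = - X2" unfolding X2_def H_def ..
    finally show ?thesis .
  qed
  have e6: "R1b = - X3"
  proof -
    define K where "K = (\<lambda>p q. sF (\<lambda>r s. \<phi> (q * r) * \<psi> s) (D b p))"
    have bK: "bil sc K" unfolding K_def bil_def
    proof (intro conjI allI)
      fix q show "lin_fun sc (\<lambda>p. sF (\<lambda>r s. \<phi> (q * r) * \<psi> s) (D b p))"
        by (rule D_lin2[OF bil_prod[OF lin_multl[OF alg \<phi>] \<psi>]])
    next
      fix p show "lin_fun sc (\<lambda>q. sF (\<lambda>r s. \<phi> (q * r) * \<psi> s) (D b p))"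
        by (rule lin_sF_param) (rule lin_cmulr[OF lin_multr[OF alg \<phi>]])
    qed
    have "R1b = sF K (D c a)" unfolding R1b_def K_def ..
    also have "\<dots> = - sF (\<lambda>x y. K y x) (D a c)" by (rule D_anti[OF bK])
    also have "\<dots> = - X3" unfolding X3_def K_def ..
    finally show ?thesis .
  qed
  show ?thesis unfolding L R e1 e2 e3 e4 e5 e6 by (simp add: algebra_simps)
qed

end


theorem proposition2p4p2:
  fixes sc :: "'k::field_char_0 \<Rightarrow> 'a::ring_1 \<Rightarrow> 'a"
    and D :: "'a \<Rightarrow> 'a \<Rightarrow> ('a \<times> 'a) list"
    and a b c :: 'a
  assumes "k_algebra sc"
    and "is_double_bracket sc D"
  shows "teq2 sc
     (brT D a (D b c) @ neg2 (D (br D a b) c) @ neg2 (D b (br D a c)))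
     (m_1 (tri D a b c) @ neg2 (one_m (tri D b a c)))"
  unfolding teq2_def using main[OF assms] by blast

end
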